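(* Let $q^*$ be the unique positive solution of the equation $q\log 2=2^{q-1}-1$, and let $0<q<q^*$. For $p>q$ let $V(x)=\frac{|x|^p}{p}-\frac{|x|^q}{q}$ on ${\mathbb R}$ and $E(\rho)=\frac12\iint V(x-y)\,d\rho(x)\,d\rho(y)$ for $\rho\in\mathcal P({\mathbb R})$. Then there exists $p_*=p_*(q)>q$ such that for all $p\in(q,p_* )$ and all $1\le\lambda<\infty$, the measure $\rho^*=\frac12\delta_0+\frac12\delta_1$ is not a $d_\lambda$-local minimizer of $E$.
   Context: $\mathcal P_\lambda({\mathbb R})$ is the set of Borel probability measures on ${\mathbb R}$ with finite moment of order $\lambda$, and $d_\lambda(\mu,\nu)=\big[\inf_{\pi\in\Pi(\mu,\nu)}\iint|x-y|^\lambda d\pi(x,y)\big]^{1/\lambda}$ is the $\lambda$-Wasserstein distance, $\Pi(\mu,\nu)$ being the set of couplings. A measure $\rho\in\mathcal P_\lambda({\mathbb R})$ is a $d_\lambda$-local minimizer of $E$ if there is $\eta>0$ such that $E(\rho)\le E(\rho')$ for all $\rho'\in\mathcal P_\lambda({\mathbb R})$ with $d_\lambda(\rho,\rho')\le\eta$. *)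

theory Defs
  imports "HOL-Probability.Probability"
begin

definition P_lam :: "real \<Rightarrow> real measure set" where
  "P_lam lam = {\<mu>. prob_space \<mu> \<and> sets \<mu> = sets (borel :: real measure) \<and>
                   integrable \<mu> (\<lambda>x. \<bar>x\<bar> powr lam)}"

definition couplings :: "real measure \<Rightarrow> real measure \<Rightarrow> (real \<times> real) measure set" where
  "couplings \<mu> \<nu> = {\<pi>. prob_space \<pi> \<and> sets \<pi> = sets (borel \<Otimes>\<^sub>M borel :: (real \<times> real) measure) \<and>
                       distr \<pi> borel fst = \<mu> \<and> distr \<pi> borel snd = \<nu>}"

definition wasserstein :: "real \<Rightarrow> real measure \<Rightarrow> real measure \<Rightarrow> real" where
  "wasserstein lam \<mu> \<nu> =
     (enn2real (INF \<pi>\<in>couplings \<mu> \<nu>. \<integral>\<^sup>+ z. ennreal (\<bar>fst z - snd z\<bar> powr lam) \<partial>\<pi>)) powr (1 / lam)"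

definition V_pot :: "real \<Rightarrow> real \<Rightarrow> real \<Rightarrow> real" where
  "V_pot p q x = \<bar>x\<bar> powr p / p - \<bar>x\<bar> powr q / q"

text \<open>Interaction energy E(rho) = 1/2 iint V(x-y) drho drho, extended-real valued:
  V is bounded below, so when V(x-y) is not integrable the energy is +infinity.\<close>
definition energy :: "real \<Rightarrow> real \<Rightarrow> real measure \<Rightarrow> ereal" where
  "energy p q \<rho> =
     (if integrable (\<rho> \<Otimes>\<^sub>M \<rho>) (\<lambda>z. V_pot p q (fst z - snd z))
      then ereal ((1/2) * (\<integral> z. V_pot p q (fst z - snd z) \<partial>(\<rho> \<Otimes>\<^sub>M \<rho>)))
      else \<infinity>)"

definition local_minimizer :: "real \<Rightarrow> (real measure \<Rightarrow> ereal) \<Rightarrow> real measure \<Rightarrow> bool" where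
  "local_minimizer lam E \<rho> \<longleftrightarrow> \<rho> \<in> P_lam lam \<and>
     (\<exists>\<eta>>0. \<forall>\<rho>'\<in>P_lam lam. wasserstein lam \<rho> \<rho>' \<le> \<eta> \<longrightarrow> E \<rho> \<le> E \<rho>')"

definition rho_star :: "real measure" where
  "rho_star = distr (measure_pmf (pmf_of_set {0::real, 1})) borel id"

end

theory Submission
  imports Defs
begin
lemma Vmeas[measurable]: "V_pot p q \<in> borel_measurable borel"
  unfolding V_pot_def by measurable

lemma distr_pmf_int:
  fixes M :: "real pmf" and g :: "real \<Rightarrow> real"
  assumes A: "finite A" "set_pmf M \<subseteq> A" and g: "g \<in> borel_measurable borel"
  shows "integral\<^sup>L (distr (measure_pmf M) borel id) g = (\<Sum>x\<in>A. pmf M x * g x)"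
proof -
  have "integral\<^sup>L (distr (measure_pmf M) borel id) g = integral\<^sup>L (measure_pmf M) g"
    by (subst integral_distr) (use g in auto)
  also have "\<dots> = (\<Sum>x\<in>A. pmf M x * g x)"
    by (subst integral_measure_pmf[OF A(1)]) (use A(2) in auto)
  finally show ?thesis .
qed

lemma distr_pmf_nn:
  fixes M :: "real pmf" and g :: "real \<Rightarrow> ennreal"
  assumes A: "finite A" "set_pmf M \<subseteq> A" and g: "g \<in> borel_measurable borel"
  shows "(\<integral>\<^sup>+x. g x \<partial>(distr (measure_pmf M) borel id)) = (\<Sum>x\<in>A. g x * pmf M x)"
proof -
  have "(\<integral>\<^sup>+x. g x \<partial>(distr (measure_pmf M) borel id)) = (\<integral>\<^sup>+x. g x \<partial>measure_pmf M)"
    by (subst nn_integral_distr) (use g in auto)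
  also have "\<dots> = (\<Sum>x\<in>A. g x * pmf M x)"
    by (rule nn_integral_measure_pmf_support[OF A(1)]) (use A(2) in \<open>auto simp: set_pmf_eq\<close>)
  finally show ?thesis .
qed

lemma fin_pair:
  fixes M :: "real pmf" and A :: "real set" and f :: "real \<Rightarrow> real \<Rightarrow> real"
  assumes A: "finite A" "set_pmf M \<subseteq> A"
  assumes fm[measurable]: "case_prod f \<in> borel_measurable (borel \<Otimes>\<^sub>M borel)"
  defines "\<rho> \<equiv> distr (measure_pmf M) borel id"
  shows "integrable (\<rho> \<Otimes>\<^sub>M \<rho>) (case_prod f)"
    and "integral\<^sup>L (\<rho> \<Otimes>\<^sub>M \<rho>) (case_prod f) = (\<Sum>x\<in>A. \<Sum>y\<in>A. pmf M x * (pmf M y * f x y))"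
proof -
  interpret R: prob_space \<rho> unfolding \<rho>_def by (rule measure_pmf.prob_space_distr) auto
  interpret P: pair_prob_space \<rho> \<rho> by unfold_locales
  have sr[simp]: "sets \<rho> = sets borel" unfolding \<rho>_def by simp
  have fm'[measurable]: "case_prod f \<in> borel_measurable (\<rho> \<Otimes>\<^sub>M \<rho>)"
    using fm measurable_cong_sets[OF sets_pair_measure_cong[OF sr sr] refl] by blast
  have fx[measurable]: "(\<lambda>y. f x y) \<in> borel_measurable borel" for x
    by measurable
  have fy[measurable]: "(\<lambda>x. f x y) \<in> borel_measurable borel" for y
    by measurable
  have nn1: "(\<integral>\<^sup>+y. ennreal (norm (f x y)) \<partial>\<rho>) = (\<Sum>y\<in>A. ennreal (norm (f x y)) * pmf M y)" for x
    unfolding \<rho>_def by (rule distr_pmf_nn[OF A]) measurable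
  have "(\<integral>\<^sup>+z. ennreal (norm (case_prod f z)) \<partial>(\<rho> \<Otimes>\<^sub>M \<rho>)) = (\<integral>\<^sup>+x. \<integral>\<^sup>+y. ennreal (norm (f x y)) \<partial>\<rho> \<partial>\<rho>)"
    by (subst R.nn_integral_fst[symmetric]) (use fm' in auto)
  also have "\<dots> = (\<integral>\<^sup>+x. (\<Sum>y\<in>A. ennreal (norm (f x y)) * pmf M y) \<partial>\<rho>)"
    using nn1 by simp
  also have "\<dots> = (\<Sum>x\<in>A. (\<Sum>y\<in>A. ennreal (norm (f x y)) * pmf M y) * pmf M x)"
    unfolding \<rho>_def by (rule distr_pmf_nn[OF A]) measurable
  also have "\<dots> < \<infinity>"
    using A(1) by (simp add: ennreal_mult_less_top top.not_eq_extremum ennreal_mult_eq_top_iff)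
  finally show int: "integrable (\<rho> \<Otimes>\<^sub>M \<rho>) (case_prod f)"
    by (intro integrableI_bounded) auto
  have i1: "(\<integral>y. f x y \<partial>\<rho>) = (\<Sum>y\<in>A. pmf M y * f x y)" for x
    unfolding \<rho>_def by (rule distr_pmf_int[OF A]) measurable
  have "integral\<^sup>L (\<rho> \<Otimes>\<^sub>M \<rho>) (case_prod f) = (\<integral>x. \<integral>y. f x y \<partial>\<rho> \<partial>\<rho>)"
    using P.integral_fst[OF int] by simp
  also have "\<dots> = (\<integral>x. (\<Sum>y\<in>A. pmf M y * f x y) \<partial>\<rho>)"
    by (simp add: i1)
  also have "\<dots> = (\<Sum>x\<in>A. pmf M x * (\<Sum>y\<in>A. pmf M y * f x y))"
    unfolding \<rho>_def by (rule distr_pmf_int[OF A]) measurable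
  finally show "integral\<^sup>L (\<rho> \<Otimes>\<^sub>M \<rho>) (case_prod f) = (\<Sum>x\<in>A. \<Sum>y\<in>A. pmf M x * (pmf M y * f x y))"
    by (simp add: sum_distrib_left)
qed

lemma energy_fin:
  fixes M :: "real pmf"
  assumes A: "finite A" "set_pmf M \<subseteq> A"
  shows "energy p q (distr (measure_pmf M) borel id) =
    ereal (1/2 * (\<Sum>x\<in>A. \<Sum>y\<in>A. pmf M x * (pmf M y * V_pot p q (x - y))))"
proof -
  have e: "(\<lambda>z. V_pot p q (fst z - snd z)) = case_prod (\<lambda>x y. V_pot p q (x - y))" by auto
  have m: "case_prod (\<lambda>x y. V_pot p q (x - y)) \<in> borel_measurable (borel \<Otimes>\<^sub>M borel)"
    by measurable
  show ?thesis unfolding energy_def e using fin_pair[OF A m] by simp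
qed

lemma P_lam_fin:
  fixes M :: "real pmf"
  assumes A: "finite A" "set_pmf M \<subseteq> A"
  shows "distr (measure_pmf M) borel id \<in> P_lam lam"
proof -
  have fin: "finite (set_pmf M)" using A finite_subset by blast
  have "integrable (measure_pmf M) (\<lambda>x. \<bar>x\<bar> powr lam)"
    by (rule integrable_measure_pmf_finite[OF fin])
  then have "integrable (distr (measure_pmf M) borel id) (\<lambda>x. \<bar>x\<bar> powr lam)"
    by (subst integrable_distr_eq) auto
  moreover have "prob_space (distr (measure_pmf M) borel id)"
    by (rule measure_pmf.prob_space_distr) simp
  ultimately show ?thesis unfolding P_lam_def by simp
qed
lemma key_ineq:
  fixes q qs :: real
  assumes "qs > 0" "qs * ln 2 = 2 powr (qs - 1) - 1" "0 < q" "q < qs"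
  shows "2 powr (q - 1) < q * ln 2 + 1"
proof -
  define s where "s = q / qs"
  have s: "0 < s" "s < 1" using assms by (auto simp: s_def)
  have c: "exp ((1 - s) *\<^sub>R (- ln 2) + s *\<^sub>R ((qs - 1) * ln 2)) \<le> (1 - s) * exp (- ln 2) + s * exp ((qs - 1) * ln 2)"
    using convex_onD[OF exp_convex, of s "- ln 2" "(qs - 1) * ln 2"] s by simp
  have e1: "(1 - s) *\<^sub>R (- ln 2) + s *\<^sub>R ((qs - 1) * ln 2) = (q - 1) * ln 2"
    using assms(1) unfolding s_def by (simp add: field_simps)
  have e2: "exp (- ln 2) = (1/2::real)" by (simp add: exp_minus)
  have e3: "exp ((qs - 1) * ln 2) = 2 powr (qs - 1)" by (simp add: powr_def)
  have e5: "2 powr (qs - 1) = qs * ln 2 + 1" using assms(2) by simp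
  have e4: "exp ((q - 1) * ln 2) = 2 powr (q - 1)" by (simp add: powr_def)
  have "2 powr (q - 1) \<le> (1 - s) / 2 + s * (qs * ln 2 + 1)"
    using c unfolding e1 e2 e3 e4 e5 by simp
  also have "s * (qs * ln 2 + 1) = q * ln 2 + s" using assms(1) unfolding s_def by (simp add: field_simps)
  finally have "2 powr (q - 1) \<le> (1 - s) / 2 + (q * ln 2 + s)" .
  moreover have "(1 - s) / 2 + (q * ln 2 + s) < q * ln 2 + 1" using s by (simp add: field_simps)
  ultimately show ?thesis by linarith
qed
lemma deriv_G:
  fixes q :: real
  assumes "0 < q"
  shows "((\<lambda>p. 1/p - 2 * ((1/2) powr p / p)) has_real_derivative
     (- 1 / q^2 + 2 * (1/2) powr q * (q * ln 2 + 1) / q^2)) (at q)"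
proof -
  have "((\<lambda>p. 1/p - 2 * ((1/2) powr p / p)) has_real_derivative
     (- 1 / q^2 - 2 * (((1/2) powr q * ln (1/2) * q - (1/2) powr q) / q^2))) (at q)"
    using assms by (auto intro!: derivative_eq_intros simp: power2_eq_square)
  moreover have e: "- 1 / q^2 - 2 * (((1/2) powr q * ln (1/2) * q - (1/2) powr q) / q^2)
      = - 1 / q^2 + 2 * (1/2) powr q * (q * ln 2 + 1) / q^2"
    using assms by (simp add: ln_div field_split_simps)
  ultimately show ?thesis by (simp only: e)
qed
lemma exists_d:
  fixes q :: real
  assumes q: "0 < q" and k: "2 powr (q - 1) < q * ln 2 + 1"
  shows "\<exists>d>0. \<forall>p. q < p \<and> p < q + d \<longrightarrow> 2 * V_pot p q (1/2) < V_pot p q 1"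
proof -
  have h1: "2 * (1/2::real) powr q = 1 / 2 powr (q - 1)"
    by (simp add: powr_divide powr_diff)
  have "1 < (q * ln 2 + 1) / 2 powr (q - 1)" using k by simp
  also have "\<dots> = 2 * (1/2) powr q * (q * ln 2 + 1)" using h1 by simp
  finally have "0 < (- 1 + 2 * (1/2) powr q * (q * ln 2 + 1)) / q^2" using q by simp
  then have pos: "0 < - 1 / q^2 + 2 * (1/2) powr q * (q * ln 2 + 1) / q^2"
    by (simp add: diff_divide_distrib)
  obtain d where d: "d > 0" and dd: "\<And>h. h > 0 \<Longrightarrow> h < d \<Longrightarrow>
      1/q - 2 * ((1/2) powr q / q) < 1/(q+h) - 2 * ((1/2) powr (q+h) / (q+h))"
    using DERIV_pos_inc_right[OF deriv_G[OF q] pos] by blast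
  show ?thesis
  proof (intro exI[of _ d] conjI allI impI)
    fix p assume p: "q < p \<and> p < q + d"
    have "1/q - 2 * ((1/2) powr q / q) < 1/p - 2 * ((1/2) powr p / p)"
      using dd[of "p - q"] p by simp
    then show "2 * V_pot p q (1/2) < V_pot p q 1"
      unfolding V_pot_def by simp
  qed (rule d)
qed
definition Pt :: "real \<Rightarrow> real pmf" where
  "Pt t = pmf_of_list [(0, (1-t)/2), (1, (1-t)/2), (1/2, t)]"

lemma Pt_wf: "0 \<le> (t::real) \<Longrightarrow> t \<le> 1 \<Longrightarrow> pmf_of_list_wf [(0::real, (1-t)/2), (1, (1-t)/2), (1/2, t)]"
  by (simp add: pmf_of_list_wf_def)
lemma Pt_pmf: "0 \<le> t \<Longrightarrow> t \<le> 1 \<Longrightarrow>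
  pmf (Pt t) x = (if x = 0 then (1-t)/2 else if x = 1 then (1-t)/2 else if x = 1/2 then t else 0)"
  unfolding Pt_def by (subst pmf_pmf_of_list[OF Pt_wf]) auto

lemma Pt_set: "0 \<le> t \<Longrightarrow> t \<le> 1 \<Longrightarrow> set_pmf (Pt t) \<subseteq> {0, 1, 1/2}"
  unfolding Pt_def using set_pmf_of_list[OF Pt_wf, of t] by auto

lemma V_even: "V_pot p q (- x) = V_pot p q x" by (simp add: V_pot_def)
lemma V_zero: "V_pot p q 0 = 0" by (simp add: V_pot_def)

lemma energy_Pt:
  assumes "0 \<le> t" "t \<le> 1"
  shows "energy p q (distr (measure_pmf (Pt t)) borel id) =
    ereal (((1-t)/2)^2 * V_pot p q 1 + 2 * ((1-t)/2) * t * V_pot p q (1/2))"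
proof -
  have "energy p q (distr (measure_pmf (Pt t)) borel id) =
    ereal (1/2 * (\<Sum>x\<in>{0,1,1/2}. \<Sum>y\<in>{0,1,1/2}. pmf (Pt t) x * (pmf (Pt t) y * V_pot p q (x - y))))"
    by (rule energy_fin) (use Pt_set[OF assms] in auto)
  also have "\<dots> = ereal (((1-t)/2)^2 * V_pot p q 1 + 2 * ((1-t)/2) * t * V_pot p q (1/2))"
    using V_even[of p q 1] V_even[of p q "1/2"]
    by (simp add: Pt_pmf[OF assms] V_zero) (simp add: field_simps power2_eq_square)
  finally show ?thesis .
qed

lemma energy_star: "energy p q rho_star = ereal (V_pot p q 1 / 4)"
proof -
  have "energy p q rho_star =
    ereal (1/2 * (\<Sum>x\<in>{0,1}. \<Sum>y\<in>{0,1}. pmf (pmf_of_set {0::real,1}) x * (pmf (pmf_of_set {0::real,1}) y * V_pot p q (x - y))))"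
    unfolding rho_star_def by (rule energy_fin) auto
  also have "\<dots> = ereal (V_pot p q 1 / 4)"
    using V_even[of p q 1] by (simp add: V_zero)
  finally show ?thesis .
qed
definition Cl :: "real \<Rightarrow> ((real \<times> real) \<times> real) list" where
  "Cl t = [((0,0), (1-t)/2), ((1,1), (1-t)/2), ((0,1/2), t/2), ((1,1/2), t/2)]"

lemma Cl_wf: "0 \<le> (t::real) \<Longrightarrow> t \<le> 1 \<Longrightarrow> pmf_of_list_wf (Cl t)"
  by (simp add: pmf_of_list_wf_def Cl_def)

lemma distr_map:
  fixes C :: "'a pmf" and f :: "'a \<Rightarrow> real"
  shows "distr (measure_pmf C) borel f = distr (measure_pmf (map_pmf f C)) borel id"
  unfolding map_pmf_rep_eq by (subst distr_distr) (auto simp: comp_def)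

lemma map_fst_C:
  assumes "0 \<le> t" "t \<le> 1"
  shows "map_pmf fst (pmf_of_list (Cl t)) = pmf_of_set {0, 1}"
proof (rule pmf_eqI)
  fix x :: real
  show "pmf (map_pmf fst (pmf_of_list (Cl t))) x = pmf (pmf_of_set {0, 1}) x"
    unfolding pmf_map measure_pmf_of_list[OF Cl_wf[OF assms]]
    by (auto simp: Cl_def indicator_def field_simps)
qed

lemma map_snd_C:
  assumes "0 \<le> t" "t \<le> 1"
  shows "map_pmf snd (pmf_of_list (Cl t)) = Pt t"
proof (rule pmf_eqI)
  fix x :: real
  show "pmf (map_pmf snd (pmf_of_list (Cl t))) x = pmf (Pt t) x"
    unfolding pmf_map measure_pmf_of_list[OF Cl_wf[OF assms]] Pt_pmf[OF assms]
    by (auto simp: Cl_def)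
qed

lemma coupling_C:
  assumes "0 \<le> t" "t \<le> 1"
  shows "distr (measure_pmf (pmf_of_list (Cl t))) (borel \<Otimes>\<^sub>M borel) id
     \<in> couplings rho_star (distr (measure_pmf (Pt t)) borel id)"
proof -
  let ?C = "measure_pmf (pmf_of_list (Cl t))"
  have "distr (distr ?C (borel \<Otimes>\<^sub>M borel) id) borel fst = distr ?C borel fst"
    by (subst distr_distr) (auto simp: comp_def space_pair_measure)
  also have "\<dots> = rho_star"
    unfolding rho_star_def distr_map[of _ fst] map_fst_C[OF assms] ..
  finally have 1: "distr (distr ?C (borel \<Otimes>\<^sub>M borel) id) borel fst = rho_star" .
  have "distr (distr ?C (borel \<Otimes>\<^sub>M borel) id) borel snd = distr ?C borel snd"
    by (subst distr_distr) (auto simp: comp_def space_pair_measure)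
  also have "\<dots> = distr (measure_pmf (Pt t)) borel id"
    unfolding distr_map[of _ snd] map_snd_C[OF assms] ..
  finally have 2: "distr (distr ?C (borel \<Otimes>\<^sub>M borel) id) borel snd = distr (measure_pmf (Pt t)) borel id" .
  have 3: "prob_space (distr ?C (borel \<Otimes>\<^sub>M borel) id)"
    by (rule measure_pmf.prob_space_distr) (simp add: space_pair_measure)
  show ?thesis unfolding couplings_def using 1 2 3 by simp
qed

lemma cost_C:
  assumes "0 \<le> t" "t \<le> 1" "lam > 0"
  shows "(\<integral>\<^sup>+ z. ennreal (\<bar>fst z - snd z\<bar> powr lam)
      \<partial>distr (measure_pmf (pmf_of_list (Cl t))) (borel \<Otimes>\<^sub>M borel) id) = ennreal (t * (1/2) powr lam)"
proof -
  let ?C = "pmf_of_list (Cl t)"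
  have "(\<integral>\<^sup>+ z. ennreal (\<bar>fst z - snd z\<bar> powr lam)
      \<partial>distr (measure_pmf ?C) (borel \<Otimes>\<^sub>M borel) id) = (\<integral>\<^sup>+ z. ennreal (\<bar>fst z - snd z\<bar> powr lam) \<partial>measure_pmf ?C)"
    by (subst nn_integral_distr) (auto simp: space_pair_measure)
  also have "\<dots> = (\<Sum>z\<in>{(0,0),(1,1),(0,1/2),(1,1/2)}. ennreal (\<bar>fst z - snd z\<bar> powr lam) * pmf ?C z)"
    by (rule nn_integral_measure_pmf_support)
       (use set_pmf_of_list[OF Cl_wf[OF assms(1,2)]] in \<open>auto simp: Cl_def\<close>)
  also have "\<dots> = (\<Sum>z\<in>{(0,0),(1,1),(0,1/2),(1,1/2)}. ennreal (\<bar>fst z - snd z\<bar> powr lam * pmf ?C z))"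
    by (intro sum.cong refl) (simp add: ennreal_mult)
  also have "\<dots> = ennreal (\<Sum>z\<in>{(0,0),(1,1),(0,1/2),(1,1/2)}. \<bar>fst z - snd z\<bar> powr lam * pmf ?C z)"
    by (rule sum_ennreal) simp
  also have "(\<Sum>z\<in>{(0,0),(1,1),(0,1/2),(1,1/2)}. \<bar>fst z - snd z\<bar> powr lam * pmf ?C z) = t * (1/2) powr lam"
  proof -
    have a: "pmf ?C (0,1/2) = t/2" "pmf ?C (1,1/2) = t/2"
      unfolding pmf_pmf_of_list[OF Cl_wf[OF assms(1,2)]] by (simp_all add: Cl_def)
    show ?thesis by (simp add: a field_simps)
  qed
  finally show ?thesis .
qed
lemma wass_bound:
  assumes t: "0 \<le> t" "t \<le> 1" and lam: "1 \<le> lam" and eta: "0 < eta" and te: "t \<le> eta powr lam"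
  shows "wasserstein lam rho_star (distr (measure_pmf (Pt t)) borel id) \<le> eta"
proof -
  let ?\<pi> = "distr (measure_pmf (pmf_of_list (Cl t))) (borel \<Otimes>\<^sub>M borel) id"
  let ?c = "t * (1/2) powr lam"
  have "(INF \<pi>\<in>couplings rho_star (distr (measure_pmf (Pt t)) borel id).
          \<integral>\<^sup>+ z. ennreal (\<bar>fst z - snd z\<bar> powr lam) \<partial>\<pi>) \<le>
        (\<integral>\<^sup>+ z. ennreal (\<bar>fst z - snd z\<bar> powr lam) \<partial>?\<pi>)"
    by (rule INF_lower) (rule coupling_C[OF t])
  also have "\<dots> = ennreal ?c" using cost_C[OF t] lam by simp
  finally have I: "(INF \<pi>\<in>couplings rho_star (distr (measure_pmf (Pt t)) borel id).
          \<integral>\<^sup>+ z. ennreal (\<bar>fst z - snd z\<bar> powr lam) \<partial>\<pi>) \<le> ennreal ?c" .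
  have c0: "0 \<le> ?c" using t by simp
  have "enn2real (INF \<pi>\<in>couplings rho_star (distr (measure_pmf (Pt t)) borel id).
          \<integral>\<^sup>+ z. ennreal (\<bar>fst z - snd z\<bar> powr lam) \<partial>\<pi>) \<le> enn2real (ennreal ?c)"
    by (rule enn2real_mono[OF I]) simp
  also have "\<dots> = ?c" using c0 by simp
  also have "?c \<le> t" using t lam by (simp add: mult_left_le powr_le1)
  also have "\<dots> \<le> eta powr lam" by (rule te)
  finally have J: "enn2real (INF \<pi>\<in>couplings rho_star (distr (measure_pmf (Pt t)) borel id).
          \<integral>\<^sup>+ z. ennreal (\<bar>fst z - snd z\<bar> powr lam) \<partial>\<pi>) \<le> eta powr lam" .
  have "wasserstein lam rho_star (distr (measure_pmf (Pt t)) borel id) \<le> (eta powr lam) powr (1/lam)"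
    unfolding wasserstein_def by (rule powr_mono2) (use J lam in auto)
  also have "\<dots> = eta" using lam eta by (simp add: powr_powr)
  finally show ?thesis .
qed

theorem proposition2:
  fixes q qstar :: real
  assumes "qstar > 0" and "qstar * ln 2 = 2 powr (qstar - 1) - 1"
    and "0 < q" and "q < qstar"
  shows "\<exists>pstar > q. \<forall>p. q < p \<and> p < pstar \<longrightarrow>
           (\<forall>lam. 1 \<le> lam \<longrightarrow> \<not> local_minimizer lam (energy p q) rho_star)"
proof -
  have k: "2 powr (q - 1) < q * ln 2 + 1" by (rule key_ineq[OF assms])
  obtain d where d: "d > 0" and dd: "\<And>p. q < p \<Longrightarrow> p < q + d \<Longrightarrow> 2 * V_pot p q (1/2) < V_pot p q 1"
    using exists_d[OF assms(3) k] by blast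
  show ?thesis
  proof (intro exI[of _ "q + d"] conjI allI impI notI)
    show "q < q + d" using d by simp
    fix p lam assume p: "q < p \<and> p < q + d" and lam: "1 \<le> lam"
      and lm: "local_minimizer lam (energy p q) rho_star"
    obtain eta where eta: "eta > 0" and H: "\<And>\<rho>'. \<rho>' \<in> P_lam lam \<Longrightarrow>
        wasserstein lam rho_star \<rho>' \<le> eta \<Longrightarrow> energy p q rho_star \<le> energy p q \<rho>'"
      using lm unfolding local_minimizer_def by blast
    define V1 where "V1 = V_pot p q 1"
    define Vh where "Vh = V_pot p q (1/2)"
    define D where "D = V1 - 2 * Vh"
    have V1: "V1 < 0" using p assms(3) unfolding V1_def V_pot_def by (simp add: frac_less2)
    have D: "D > 0" using dd[of p] p unfolding D_def V1_def Vh_def by simp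
    define t where "t = min (1/2) (min (D / (2 * (- V1))) (eta powr lam))"
    have t0: "0 < t" using D V1 eta unfolding t_def by (simp add: divide_pos_neg)
    have t1: "t \<le> 1/2" and t2: "t \<le> D / (2 * (- V1))" and t3: "t \<le> eta powr lam"
      unfolding t_def by auto
    let ?\<rho> = "distr (measure_pmf (Pt t)) borel id"
    have inP: "?\<rho> \<in> P_lam lam"
      by (rule P_lam_fin[of "{0,1,1/2}"]) (use Pt_set[of t] t0 t1 in auto)
    have W: "wasserstein lam rho_star ?\<rho> \<le> eta"
      by (rule wass_bound) (use t0 t1 t3 lam eta in auto)
    have tv: "t * (- V1) \<le> D / 2" using t2 V1 by (simp add: le_divide_eq field_simps)
    have tD: "t * D \<le> D / 2" using mult_right_mono[OF t1, of D] D by simp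
    have e1: "(1 - t) * D = D - t * D" by (simp add: algebra_simps)
    have br: "t * (- V1) / 4 - (1 - t) * D / 2 < 0" 
    proof -
      have aux: "\<And>a b. a \<le> D/2 \<Longrightarrow> b \<le> D/2 \<Longrightarrow> a/4 - (D - b)/2 < 0" using D by (simp add: field_simps)
      show ?thesis unfolding e1 by (rule aux[OF tv tD])
    qed
    have "t * (t * (- V1) / 4 - (1 - t) * D / 2) < 0" using t0 br by (simp add: mult_pos_neg)
    moreover have "((1-t)/2)^2 * V1 + 2 * ((1-t)/2) * t * Vh - V1 / 4 = t * (t * (- V1) / 4 - (1 - t) * D / 2)"
      unfolding D_def by (simp add: field_simps power2_eq_square)
    ultimately have lt: "((1-t)/2)^2 * V1 + 2 * ((1-t)/2) * t * Vh < V1 / 4" by linarith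
    have "energy p q ?\<rho> < energy p q rho_star"
    proof -
      have "energy p q ?\<rho> = ereal (((1-t)/2)^2 * V1 + 2 * ((1-t)/2) * t * Vh)"
        unfolding V1_def Vh_def by (rule energy_Pt) (use t0 t1 in auto)
      then show ?thesis using lt unfolding energy_star V1_def[symmetric] by simp
    qed
    moreover have "energy p q rho_star \<le> energy p q ?\<rho>" using H[OF inP W] .
    ultimately show False by simp
  qed
qed
end
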